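(* Let $M$ be a nearly finitary matroid on ground set $E$ that is not $n$-nearly finitary for any $n\in\mathbb{N}$, and let $S\subseteq E$ be finite. Then the deletion $M-S$ is a nearly finitary matroid that is not $n$-nearly finitary for any $n\in\mathbb{N}$.
   Context: Matroids (possibly infinite): $\emptyset$ independent; subsets of independent sets independent; if $B$ is maximal independent and $A$ non-maximal independent, then $A\cup\{b\}$ is independent for some $b\in B\setminus A$; for independent $A\subseteq X\subseteq E$ there is a maximal independent $S'$ with $A\subseteq S'\subseteq X$. Bases are maximal independent sets. The deletion $M-S$ is the matroid on $E\setminus S$ whose independent sets are the independent sets of $M$ contained in $E\setminus S$. The finitarization $M^{\mathrm{fin}}$ has as independent sets those sets all of whose finite subsets are independent in $M$. $M$ is nearly finitary if $F\setminus B$ is finite whenever a base $F$ of $M^{\mathrm{fin}}$ contains a base $B$ of $M$; $n$-nearly finitary if $|F\setminus B|\le n$ for all such pairs. *)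

theory Defs
  imports Main
begin

definition max_indep :: "('a set \<Rightarrow> bool) \<Rightarrow> 'a set \<Rightarrow> 'a set \<Rightarrow> bool" where
  "max_indep Ind X B \<longleftrightarrow> B \<subseteq> X \<and> Ind B \<and> (\<forall>B'. B \<subseteq> B' \<and> B' \<subseteq> X \<and> Ind B' \<longrightarrow> B' = B)"

definition basis :: "'a set \<Rightarrow> ('a set \<Rightarrow> bool) \<Rightarrow> 'a set \<Rightarrow> bool" where
  "basis E Ind B \<longleftrightarrow> max_indep Ind E B"

definition matroid :: "'a set \<Rightarrow> ('a set \<Rightarrow> bool) \<Rightarrow> bool" where
  "matroid E Ind \<longleftrightarrow>
     (\<forall>A. Ind A \<longrightarrow> A \<subseteq> E) \<and>
     Ind {} \<and>
     (\<forall>A B. Ind B \<and> A \<subseteq> B \<longrightarrow> Ind A) \<and>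
     (\<forall>A B. basis E Ind B \<and> Ind A \<and> \<not> basis E Ind A \<longrightarrow>
            (\<exists>b \<in> B - A. Ind (insert b A))) \<and>
     (\<forall>A X. Ind A \<and> A \<subseteq> X \<and> X \<subseteq> E \<longrightarrow>
            (\<exists>S'. A \<subseteq> S' \<and> max_indep Ind X S'))"

definition fin_indep :: "'a set \<Rightarrow> ('a set \<Rightarrow> bool) \<Rightarrow> 'a set \<Rightarrow> bool" where
  "fin_indep E Ind A \<longleftrightarrow> A \<subseteq> E \<and> (\<forall>F. F \<subseteq> A \<and> finite F \<longrightarrow> Ind F)"

definition del_ground :: "'a set \<Rightarrow> 'a set \<Rightarrow> 'a set" where
  "del_ground E S = E - S"

definition del_indep :: "'a set \<Rightarrow> ('a set \<Rightarrow> bool) \<Rightarrow> 'a set \<Rightarrow> 'a set \<Rightarrow> bool" where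
  "del_indep E Ind S A \<longleftrightarrow> Ind A \<and> A \<subseteq> E - S"

definition nearly_finitary :: "'a set \<Rightarrow> ('a set \<Rightarrow> bool) \<Rightarrow> bool" where
  "nearly_finitary E Ind \<longleftrightarrow>
     (\<forall>F B. basis E (fin_indep E Ind) F \<and> basis E Ind B \<and> B \<subseteq> F \<longrightarrow> finite (F - B))"

definition n_nearly_finitary :: "nat \<Rightarrow> 'a set \<Rightarrow> ('a set \<Rightarrow> bool) \<Rightarrow> bool" where
  "n_nearly_finitary n E Ind \<longleftrightarrow>
     (\<forall>F B. basis E (fin_indep E Ind) F \<and> basis E Ind B \<and> B \<subseteq> F \<longrightarrow>
        finite (F - B) \<and> card (F - B) \<le> n)"

end

theory Submission
  imports Defs
begin

lemma m_sub: "matroid E I \<Longrightarrow> I A \<Longrightarrow> A \<subseteq> E"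
  unfolding matroid_def by (drule conjunct1) (erule allE, erule mp)
lemma m_empty: "matroid E I \<Longrightarrow> I {}"
  unfolding matroid_def by (drule conjunct2, drule conjunct1)
lemma m_down: "matroid E I \<Longrightarrow> I B \<Longrightarrow> A \<subseteq> B \<Longrightarrow> I A"
  unfolding matroid_def by (drule conjunct2, drule conjunct2, drule conjunct1) (erule allE, erule allE, erule mp, rule conjI)
lemma m_aug: "matroid E I \<Longrightarrow> basis E I B \<Longrightarrow> I A \<Longrightarrow> \<not> basis E I A \<Longrightarrow> \<exists>b\<in>B - A. I (insert b A)"
  unfolding matroid_def by (drule conjunct2, drule conjunct2, drule conjunct2, drule conjunct1) (erule allE, erule allE, erule mp, simp)
lemma m_ext: "matroid E I \<Longrightarrow> I A \<Longrightarrow> A \<subseteq> X \<Longrightarrow> X \<subseteq> E \<Longrightarrow> \<exists>S'. A \<subseteq> S' \<and> max_indep I X S'"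
  unfolding matroid_def by (drule conjunct2, drule conjunct2, drule conjunct2, drule conjunct2) (erule allE, erule allE, erule mp, simp)

lemma mi_sub: "max_indep I X B \<Longrightarrow> B \<subseteq> X"
  unfolding max_indep_def by (elim conjE)
lemma mi_ind: "max_indep I X B \<Longrightarrow> I B"
  unfolding max_indep_def by (elim conjE)
lemma mi_max: "max_indep I X B \<Longrightarrow> B \<subseteq> B' \<Longrightarrow> B' \<subseteq> X \<Longrightarrow> I B' \<Longrightarrow> B' = B"
  unfolding max_indep_def by (elim conjE allE impE) auto
lemma mi_intro: "B \<subseteq> X \<Longrightarrow> I B \<Longrightarrow> (\<And>B'. B \<subseteq> B' \<Longrightarrow> B' \<subseteq> X \<Longrightarrow> I B' \<Longrightarrow> B' = B) \<Longrightarrow> max_indep I X B"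
  unfolding max_indep_def by auto
lemma mi_ins: "max_indep I X B \<Longrightarrow> x \<in> X \<Longrightarrow> x \<notin> B \<Longrightarrow> \<not> I (insert x B)"
  using mi_max[of I X B "insert x B"] mi_sub[of I X B] by auto

lemma not_max_ext:
  assumes "matroid E I" "I A" "A \<subseteq> X" "\<not> max_indep I X A"
  shows "\<exists>x\<in>X - A. I (insert x A)"
proof -
  obtain B' where "A \<subseteq> B'" "B' \<subseteq> X" "I B'" "B' \<noteq> A"
    using assms(2,3,4) mi_intro[of A X I] by metis
  then obtain x where x: "x \<in> B' - A" by blast
  then have "I (insert x A)" using m_down[OF assms(1) \<open>I B'\<close>] \<open>A \<subseteq> B'\<close> by simp
  then show ?thesis using x \<open>B' \<subseteq> X\<close> by auto
qed

lemma base_of_superset: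
  assumes M: "matroid E I" and K: "max_indep I Y K" and B: "basis E I B'" "B' \<subseteq> Y" and Y: "Y \<subseteq> E"
  shows "basis E I K"
proof (rule ccontr)
  assume "\<not> basis E I K"
  then obtain b where "b \<in> B' - K" "I (insert b K)"
    using m_aug[OF M B(1)] mi_ind[OF K] by blast
  then show False using mi_ins[OF K] B(2) by auto
qed

lemma RI3:
  assumes M: "matroid E I" and X: "X \<subseteq> E" and B: "max_indep I X B"
    and A: "I A" "A \<subseteq> X" "\<not> max_indep I X A"
  shows "\<exists>b\<in>B - A. I (insert b A)"
proof -
  obtain x where x: "x \<in> X - A" "I (insert x A)" using not_max_ext[OF M A] by blast
  have IB: "I B" "B \<subseteq> X" using mi_ind[OF B] mi_sub[OF B] by auto
  have BE: "B \<subseteq> E" using IB X by auto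
  obtain B' where B': "B \<subseteq> B'" "max_indep I E B'" using m_ext[OF M IB(1) BE order_refl] by blast
  have bB': "basis E I B'" using B'(2) by (simp add: basis_def)
  have IB': "I B'" "B' \<subseteq> E" using mi_ind[OF B'(2)] mi_sub[OF B'(2)] by auto
  define Y where "Y = insert x A \<union> B'"
  have YE: "Y \<subseteq> E" using Y_def x X A IB' by auto
  obtain K' where K': "insert x A \<subseteq> K'" "max_indep I Y K'"
    using m_ext[OF M x(2) _ YE] Y_def by blast
  have bK': "basis E I K'" using base_of_superset[OF M K'(2) bB'] Y_def YE by blast
  have IK': "I K'" "K' \<subseteq> Y" using mi_ind[OF K'(2)] mi_sub[OF K'(2)] by auto
  define Z where "Z = K' - X"
  have ZB': "Z \<subseteq> B'" using Z_def IK'(2) Y_def x A by auto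
  have II: "I (B \<union> Z)" using m_down[OF M IB'(1)] ZB' B' by auto
  have bI: "basis E I (B \<union> Z)"
  proof (rule ccontr)
    assume "\<not> basis E I (B \<union> Z)"
    then obtain k where k: "k \<in> K' - (B \<union> Z)" "I (insert k (B \<union> Z))"
      using m_aug[OF M bK' II] by blast
    have kX: "k \<in> X" using k Z_def by auto
    have "I (insert k B)" using m_down[OF M k(2)] by auto
    then show False using mi_ins[OF B kX] k by auto
  qed
  have IAZ: "I (A \<union> Z)" using m_down[OF M IK'(1)] K' Z_def by auto
  have nb: "\<not> basis E I (A \<union> Z)"
  proof
    assume "basis E I (A \<union> Z)"
    then have m: "max_indep I E (A \<union> Z)" by (simp add: basis_def)
    have "A \<union> Z \<subseteq> K'" using K' Z_def by auto
    moreover have "K' \<subseteq> E" using IK' YE by auto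
    ultimately have "K' = A \<union> Z" using mi_max[OF m] IK' by auto
    then show False using K' x Z_def by auto
  qed
  obtain b where b: "b \<in> (B \<union> Z) - (A \<union> Z)" "I (insert b (A \<union> Z))"
    using m_aug[OF M bI IAZ nb] by blast
  have "I (insert b A)" using m_down[OF M b(2)] by auto
  then show ?thesis using b by blast
qed

lemma Exch_aux:
  assumes M: "matroid E I" and X: "X \<subseteq> E" and B2: "max_indep I X B2"
  shows "\<And>B1. max_indep I X B1 \<Longrightarrow> finite (B1 - B2) \<Longrightarrow> card (B1 - B2) = n \<Longrightarrow>
     finite (B2 - B1) \<and> card (B2 - B1) = n"
proof (induction n)
  case 0
  then have "B1 \<subseteq> B2" by auto
  then have "B2 = B1" using mi_max[OF 0(1) _ mi_sub[OF B2] mi_ind[OF B2]] by simp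
  then show ?case by simp
next
  case (Suc m)
  then obtain x where x: "x \<in> B1 - B2" by (metis card.empty ex_in_conv nat.distinct(1))
  have IB1: "I B1" "B1 \<subseteq> X" using mi_ind[OF Suc.prems(1)] mi_sub[OF Suc.prems(1)] by auto
  have IA: "I (B1 - {x})" using m_down[OF M IB1(1)] by auto
  have nmA: "\<not> max_indep I X (B1 - {x})"
  proof
    assume "max_indep I X (B1 - {x})"
    then have "B1 = B1 - {x}" using mi_max[of I X "B1 - {x}" B1] IB1 by auto
    then show False using x by auto
  qed
  obtain y where y: "y \<in> B2 - (B1 - {x})" "I (insert y (B1 - {x}))"
    using RI3[OF M X B2 IA _ nmA] IB1 by blast
  have yB1: "y \<notin> B1" "y \<noteq> x" using y x by auto
  have yX: "y \<in> X" using y mi_sub[OF B2] by auto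
  define B1' where "B1' = insert y (B1 - {x})"
  have sB1': "B1' \<subseteq> X" using B1'_def yX IB1 by auto
  have mB1': "max_indep I X B1'"
  proof (rule ccontr)
    assume na: "\<not> max_indep I X B1'"
    obtain b where b: "b \<in> B1 - B1'" "I (insert b B1')"
      using RI3[OF M X Suc.prems(1) y(2)[folded B1'_def] sB1' na] by blast
    have "b = x" using b B1'_def by auto
    then have "insert b B1' = insert y B1" using B1'_def x by auto
    then show False using b mi_ins[OF Suc.prems(1) yX] yB1 by auto
  qed
  have e1: "B1' - B2 = (B1 - B2) - {x}" using B1'_def y by auto
  have "finite (B1' - B2)" "card (B1' - B2) = m" using e1 Suc.prems x by auto
  then have IH: "finite (B2 - B1')" "card (B2 - B1') = m" using Suc.IH[OF mB1'] by auto
  have e2: "B2 - B1 = insert y (B2 - B1')" using B1'_def y x by auto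
  have "y \<notin> B2 - B1'" using B1'_def by auto
  then show ?case using e2 IH by simp
qed

lemma Exch:
  assumes M: "matroid E I" and X: "X \<subseteq> E" and "max_indep I X B1" "max_indep I X B2" "finite (B1 - B2)"
  shows "finite (B2 - B1) \<and> card (B2 - B1) = card (B1 - B2)"
  using Exch_aux[OF M X assms(4) assms(3) assms(5)] by blast

lemma LemmaX:
  assumes M: "matroid E I" and X: "X \<subseteq> E" and B: "max_indep I X B" and A: "I A" "A \<subseteq> X"
    and f: "finite (B - A)"
  shows "finite (A - B) \<and> card (A - B) \<le> card (B - A)"
proof -
  obtain B2 where B2: "A \<subseteq> B2" "max_indep I X B2" using m_ext[OF M A X] by blast
  have s: "A - B \<subseteq> B2 - B" "B - B2 \<subseteq> B - A" using B2 by auto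
  have f2: "finite (B - B2)" using f s(2) finite_subset by auto
  have h: "finite (B2 - B) \<and> card (B2 - B) = card (B - B2)" using Exch[OF M X B B2(2) f2] .
  have "card (A - B) \<le> card (B2 - B)" using h s(1) card_mono by metis
  moreover have "card (B - B2) \<le> card (B - A)" using f s(2) card_mono by auto
  ultimately show ?thesis using h s(1) finite_subset by auto
qed

lemma equal_card:
  assumes M: "matroid E I" and X: "X \<subseteq> E" "finite X" and B1: "max_indep I X B1" and B2: "max_indep I X B2"
  shows "card B1 = card B2"
proof -
  have s: "B1 \<subseteq> X" "B2 \<subseteq> X" using mi_sub[OF B1] mi_sub[OF B2] by auto
  then have f: "finite B1" "finite B2" using X(2) finite_subset by metis+
  have c: "card (B2 - B1) = card (B1 - B2)" using Exch[OF M X(1) B1 B2] f by auto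
  have "card B1 = card (B1 - B2) + card (B1 \<inter> B2)"
  proof -
    have "(B1 - B2) \<inter> (B1 \<inter> B2) = {}" by blast
    then show ?thesis using f card_Un_disjoint[of "B1 - B2" "B1 \<inter> B2"] by (simp add: Un_Diff_Int)
  qed
  moreover have "card B2 = card (B2 - B1) + card (B1 \<inter> B2)"
  proof -
    have "(B2 - B1) \<inter> (B1 \<inter> B2) = {}" by blast
    moreover have "(B2 - B1) \<union> (B1 \<inter> B2) = B2" by blast
    ultimately show ?thesis using f card_Un_disjoint[of "B2 - B1" "B1 \<inter> B2"] by simp
  qed
  ultimately show ?thesis using c by simp
qed

lemma fin_of_ind: "matroid E I \<Longrightarrow> I A \<Longrightarrow> fin_indep E I A"
  unfolding fin_indep_def by (intro conjI allI impI, erule m_sub, assumption, erule m_down, assumption, blast)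
lemma fin_fin: "fin_indep E I A \<Longrightarrow> finite F \<Longrightarrow> F \<subseteq> A \<Longrightarrow> I F"
  unfolding fin_indep_def by blast
lemma fin_sub: "fin_indep E I A \<Longrightarrow> A \<subseteq> E"
  unfolding fin_indep_def by blast
lemma fin_down: "fin_indep E I B \<Longrightarrow> A \<subseteq> B \<Longrightarrow> fin_indep E I A"
  unfolding fin_indep_def by blast

lemma fin_dep:
  assumes M: "matroid E I" and A: "fin_indep E I A" and x: "x \<in> E" and n: "\<not> fin_indep E I (insert x A)"
  shows "\<exists>K. finite K \<and> K \<subseteq> A \<and> \<not> I (insert x K)"
proof -
  have "insert x A \<subseteq> E" using x fin_sub[OF A] by auto
  then obtain G where G: "G \<subseteq> insert x A" "finite G" "\<not> I G" using n unfolding fin_indep_def by blast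
  have "\<not> I (insert x (G - {x}))" using G(3) m_down[OF M, of "insert x (G - {x})" G] by blast
  moreover have "G - {x} \<subseteq> A" "finite (G - {x})" using G by auto
  ultimately show ?thesis by blast
qed

lemma fin_ext:
  assumes M: "matroid E I" and A: "fin_indep E I A" "A \<subseteq> X" and X: "X \<subseteq> E"
  shows "\<exists>S'. A \<subseteq> S' \<and> max_indep (fin_indep E I) X S'"
proof -
  define AA where "AA = {Z. A \<subseteq> Z \<and> Z \<subseteq> X \<and> fin_indep E I Z}"
  have ne: "AA \<noteq> {}" using A unfolding AA_def by blast
  have ch: "\<Union>C \<in> AA" if C: "C \<noteq> {}" "subset.chain AA C" for C
  proof -
    have CA: "C \<subseteq> AA" using C(2) unfolding subset.chain_def by blast
    obtain Z0 where "Z0 \<in> C" using C(1) by blast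
    then have "A \<subseteq> Z0" using CA unfolding AA_def by auto
    then have "A \<subseteq> \<Union>C" using \<open>Z0 \<in> C\<close> by auto
    moreover have "\<Union>C \<subseteq> X" using CA unfolding AA_def by auto
    moreover have "fin_indep E I (\<Union>C)"
      unfolding fin_indep_def
    proof (intro conjI allI impI)
      show "\<Union>C \<subseteq> E" using \<open>\<Union>C \<subseteq> X\<close> X by blast
      fix F assume F: "F \<subseteq> \<Union>C \<and> finite F"
      then obtain B where B: "B \<in> C" "F \<subseteq> B"
        using finite_subset_Union_chain[of F C AA] C by blast
      then have "fin_indep E I B" using CA unfolding AA_def by auto
      then show "I F" using fin_fin B F by blast
    qed
    ultimately show ?thesis unfolding AA_def by blast
  qed
  obtain Mx where Mx: "Mx \<in> AA" "\<forall>Y\<in>AA. Mx \<subseteq> Y \<longrightarrow> Y = Mx"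
    using subset_Zorn_nonempty[OF ne ch] by blast
  have "max_indep (fin_indep E I) X Mx"
  proof (rule mi_intro)
    show "Mx \<subseteq> X" "fin_indep E I Mx" using Mx unfolding AA_def by auto
    fix B' assume "Mx \<subseteq> B'" "B' \<subseteq> X" "fin_indep E I B'"
    moreover have "A \<subseteq> Mx" using Mx(1) unfolding AA_def by blast
    ultimately have "B' \<in> AA" unfolding AA_def by blast
    then show "B' = Mx" using Mx(2) \<open>Mx \<subseteq> B'\<close> by blast
  qed
  then show ?thesis using Mx unfolding AA_def by blast
qed

lemma fin_aug:
  assumes M: "matroid E I" and F: "basis E (fin_indep E I) F" and A: "fin_indep E I A"
    and nA: "\<not> basis E (fin_indep E I) A"
  shows "\<exists>f\<in>F - A. fin_indep E I (insert f A)"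
proof (rule ccontr)
  assume H: "\<not> ?thesis"
  have mF: "max_indep (fin_indep E I) E F" using F by (simp add: basis_def)
  have AE: "A \<subseteq> E" using fin_sub[OF A] .
  obtain A2 where A2: "A \<subseteq> A2" "A2 \<subseteq> E" "fin_indep E I A2" "A2 \<noteq> A"
    using nA A AE mi_intro[of A E "fin_indep E I"] unfolding basis_def by metis
  then obtain x where x: "x \<in> A2" "x \<notin> A" by blast
  have xE: "x \<in> E" using x A2 by auto
  have fAx: "fin_indep E I (insert x A)" using fin_down[OF A2(3)] x A2(1) by auto
  have xF: "x \<notin> F" using H x fAx by auto
  have "\<not> fin_indep E I (insert x F)" using mi_ins[OF mF xE xF] .
  then obtain K where K: "finite K" "K \<subseteq> F" "\<not> I (insert x K)"
    using fin_dep[OF M mi_ind[OF mF] xE] by blast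
  have "\<forall>f\<in>K - A. \<exists>Kf. finite Kf \<and> Kf \<subseteq> A \<and> \<not> I (insert f Kf)"
  proof
    fix f assume f: "f \<in> K - A"
    have fE: "f \<in> E" using f K(2) mi_sub[OF mF] by auto
    have "\<not> fin_indep E I (insert f A)" using H f K(2) by auto
    then show "\<exists>Kf. finite Kf \<and> Kf \<subseteq> A \<and> \<not> I (insert f Kf)" using fin_dep[OF M A fE] by blast
  qed
  then obtain g where g: "\<forall>f\<in>K - A. finite (g f) \<and> g f \<subseteq> A \<and> \<not> I (insert f (g f))"
    by metis
  define A0 where "A0 = (K \<inter> A) \<union> \<Union>(g ` (K - A))"
  have A0f: "finite A0" using A0_def g K(1) by auto
  have A0A: "A0 \<subseteq> A" using A0_def g by auto
  have xA0: "x \<notin> A0" using A0A x by auto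
  have IA0: "I A0" using fin_fin[OF A A0f A0A] .
  have IA0x: "I (insert x A0)" using fin_fin[OF fAx] A0f A0A by auto
  have IK: "I K" using fin_fin[OF mi_ind[OF mF] K(1,2)] .
  define Y where "Y = insert x (A0 \<union> K)"
  have Yf: "finite Y" using Y_def A0f K(1) by auto
  have YE: "Y \<subseteq> E" using Y_def xE A0A AE K(2) mi_sub[OF mF] by auto
  have ZE: "A0 \<union> K \<subseteq> E" using YE Y_def by auto
  have mA0: "max_indep I (A0 \<union> K) A0"
  proof (rule mi_intro)
    show "A0 \<subseteq> A0 \<union> K" "I A0" using IA0 by auto
    fix B' assume B': "A0 \<subseteq> B'" "B' \<subseteq> A0 \<union> K" "I B'"
    show "B' = A0"
    proof (rule ccontr)
      assume "B' \<noteq> A0"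
      then obtain y where y: "y \<in> B'" "y \<notin> A0" using B' by blast
      then have yKA: "y \<in> K - A" using B' A0_def by auto
      then have "g y \<subseteq> A0" using A0_def by auto
      then have "insert y (g y) \<subseteq> B'" using y B' by auto
      then have "I (insert y (g y))" using m_down[OF M B'(3)] by auto
      then show False using g yKA by auto
    qed
  qed
  obtain Ks where Ks: "K \<subseteq> Ks" "max_indep I Y Ks"
    using m_ext[OF M IK _ YE] Y_def by blast
  have xKs: "x \<notin> Ks"
  proof
    assume "x \<in> Ks"
    then have "insert x K \<subseteq> Ks" using Ks by auto
    then show False using m_down[OF M mi_ind[OF Ks(2)]] K(3) by auto
  qed
  have KsZ: "Ks \<subseteq> A0 \<union> K" using mi_sub[OF Ks(2)] xKs Y_def by auto
  have mKs: "max_indep I (A0 \<union> K) Ks"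
  proof (rule mi_intro)
    show "Ks \<subseteq> A0 \<union> K" "I Ks" using KsZ mi_ind[OF Ks(2)] by auto
    fix B' assume "Ks \<subseteq> B'" "B' \<subseteq> A0 \<union> K" "I B'"
    moreover have "A0 \<union> K \<subseteq> Y" using Y_def by auto
    ultimately show "B' = Ks" using mi_max[OF Ks(2), of B'] by blast
  qed
  obtain As where As: "insert x A0 \<subseteq> As" "max_indep I Y As"
    using m_ext[OF M IA0x _ YE] Y_def by blast
  have c1: "card A0 = card Ks" using equal_card[OF M ZE _ mA0 mKs] A0f K(1) by auto
  have c2: "card As = card Ks" using equal_card[OF M YE Yf As(2) Ks(2)] .
  have "finite As" using mi_sub[OF As(2)] Yf finite_subset by metis
  then have "card (insert x A0) \<le> card As" using As(1) card_mono by metis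
  then show False using c1 c2 xA0 A0f by auto
qed

lemma fin_matroid:
  assumes M: "matroid E I"
  shows "matroid E (fin_indep E I)"
  unfolding matroid_def
proof (intro conjI allI impI)
  show "\<And>A. fin_indep E I A \<Longrightarrow> A \<subseteq> E" using fin_sub by blast
  show "fin_indep E I {}" using fin_of_ind[OF M m_empty[OF M]] .
  show "\<And>A B. fin_indep E I B \<and> A \<subseteq> B \<Longrightarrow> fin_indep E I A" using fin_down by blast
  show "\<And>A B. basis E (fin_indep E I) B \<and> fin_indep E I A \<and> \<not> basis E (fin_indep E I) A \<Longrightarrow>
      \<exists>b\<in>B - A. fin_indep E I (insert b A)" using fin_aug[OF M] by blast
  show "\<And>A X. fin_indep E I A \<and> A \<subseteq> X \<and> X \<subseteq> E \<Longrightarrow> \<exists>S'. A \<subseteq> S' \<and> max_indep (fin_indep E I) X S'"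
    using fin_ext[OF M] by blast
qed

lemma mi_restr: "X \<subseteq> Z \<Longrightarrow> max_indep (\<lambda>A. P A \<and> A \<subseteq> Z) X B = max_indep P X B"
  unfolding max_indep_def by (metis order_trans)

lemma del_eq: "del_indep E I S = (\<lambda>A. I A \<and> A \<subseteq> E - S)"
  by (rule ext) (simp add: del_indep_def)

lemma fin_del: "fin_indep (E - S) (\<lambda>A. I A \<and> A \<subseteq> E - S) = (\<lambda>A. fin_indep E I A \<and> A \<subseteq> E - S)"
  by (rule ext) (auto simp: fin_indep_def)

lemma restr_matroid:
  assumes M: "matroid E I" and Z: "Z \<subseteq> E"
  shows "matroid Z (\<lambda>A. I A \<and> A \<subseteq> Z)"
proof -
  let ?I = "\<lambda>A. I A \<and> A \<subseteq> Z"
  have h1: "\<forall>A. ?I A \<longrightarrow> A \<subseteq> Z" by blast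
  have h2: "?I {}" using m_empty[OF M] by simp
  have h3: "\<forall>A B. ?I B \<and> A \<subseteq> B \<longrightarrow> ?I A" using m_down[OF M] by blast
  have h4: "\<forall>A B. basis Z ?I B \<and> ?I A \<and> \<not> basis Z ?I A \<longrightarrow> (\<exists>b \<in> B - A. ?I (insert b A))"
  proof (intro allI impI)
    fix A B
    assume H: "basis Z ?I B \<and> ?I A \<and> \<not> basis Z ?I A"
    have mB: "max_indep I Z B" using H mi_restr[of Z Z I B] by (simp add: basis_def)
    have nA: "\<not> max_indep I Z A" using H mi_restr[of Z Z I A] by (simp add: basis_def)
    obtain b where b: "b \<in> B - A" "I (insert b A)" using RI3[OF M Z mB _ _ nA] H by blast
    have "b \<in> Z" using b mi_sub[OF mB] by auto
    then show "\<exists>b\<in>B - A. ?I (insert b A)" using b H by auto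
  qed
  have h5: "\<forall>A X. ?I A \<and> A \<subseteq> X \<and> X \<subseteq> Z \<longrightarrow> (\<exists>S'. A \<subseteq> S' \<and> max_indep ?I X S')"
  proof (intro allI impI)
    fix A X
    assume H: "?I A \<and> A \<subseteq> X \<and> X \<subseteq> Z"
    then have "A \<subseteq> X" "X \<subseteq> E" "I A" using Z by auto
    then obtain S' where "A \<subseteq> S'" "max_indep I X S'" using m_ext[OF M] by blast
    then show "\<exists>S'. A \<subseteq> S' \<and> max_indep ?I X S'" using mi_restr[of X Z I S'] H by auto
  qed
  show ?thesis unfolding matroid_def by (rule conjI[OF h1 conjI[OF h2 conjI[OF h3 conjI[OF h4 h5]]]])
qed

theorem theorem3p4p7:
  fixes E S :: "'a set" and Ind :: "'a set \<Rightarrow> bool"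
  assumes "matroid E Ind"
    and "nearly_finitary E Ind"
    and "\<forall>n. \<not> n_nearly_finitary n E Ind"
    and "S \<subseteq> E" and "finite S"
  shows "matroid (del_ground E S) (del_indep E Ind S)
         \<and> nearly_finitary (del_ground E S) (del_indep E Ind S)
         \<and> (\<forall>n. \<not> n_nearly_finitary n (del_ground E S) (del_indep E Ind S))"
proof -
  note M = assms(1)
  define Z where "Z = E - S"
  define J where "J = fin_indep E Ind"
  have ZE: "Z \<subseteq> E" using Z_def by auto
  have NJ: "matroid E J" using fin_matroid[OF M] J_def by simp
  have eq1: "del_indep E Ind S = (\<lambda>A. Ind A \<and> A \<subseteq> Z)" using del_eq Z_def by metis
  have eq2: "fin_indep Z (\<lambda>A. Ind A \<and> A \<subseteq> Z) = (\<lambda>A. J A \<and> A \<subseteq> Z)" using fin_del[of E S Ind] Z_def J_def by simp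
  have bI: "basis Z (\<lambda>A. Ind A \<and> A \<subseteq> Z) B = max_indep Ind Z B" for B
    using mi_restr[of Z Z Ind B] by (simp add: basis_def)
  have bJ: "basis Z (\<lambda>A. J A \<and> A \<subseteq> Z) B = max_indep J Z B" for B
    using mi_restr[of Z Z J B] by (simp add: basis_def)
  have bE: "basis E I B = max_indep I E B" for I B by (simp add: basis_def)
  have NF: "\<And>F B. max_indep J E F \<Longrightarrow> max_indep Ind E B \<Longrightarrow> B \<subseteq> F \<Longrightarrow> finite (F - B)"
    using assms(2) unfolding nearly_finitary_def J_def bE by blast
  have P1: "matroid Z (\<lambda>A. Ind A \<and> A \<subseteq> Z)" using restr_matroid[OF M ZE] .
  have P2: "nearly_finitary Z (\<lambda>A. Ind A \<and> A \<subseteq> Z)"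
    unfolding nearly_finitary_def eq2 bI bJ
  proof (intro allI impI)
    fix F' B' assume H: "max_indep J Z F' \<and> max_indep Ind Z B' \<and> B' \<subseteq> F'"
    have F': "max_indep J Z F'" and B': "max_indep Ind Z B'" and BF: "B' \<subseteq> F'" using H by auto
    have IB': "Ind B'" "B' \<subseteq> Z" using mi_ind[OF B'] mi_sub[OF B'] by auto
    obtain B where B: "B' \<subseteq> B" "max_indep Ind E B" using m_ext[OF M IB'(1) _ order_refl] IB'(2) ZE by blast
    have IB: "Ind B" "B \<subseteq> E" using mi_ind[OF B(2)] mi_sub[OF B(2)] by auto
    have BS: "B - S \<subseteq> B'"
    proof
      fix y assume y: "y \<in> B - S"
      show "y \<in> B'"
      proof (rule ccontr)
        assume "y \<notin> B'"
        moreover have "y \<in> Z" using y IB Z_def by auto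
        moreover have "Ind (insert y B')" using m_down[OF M IB(1)] B y by auto
        ultimately show False using mi_ins[OF B'] by blast
      qed
    qed
    have JB: "J B" using fin_of_ind[OF M IB(1)] J_def by simp
    obtain F where F: "B \<subseteq> F" "max_indep J E F" using m_ext[OF NJ JB IB(2) order_refl] by blast
    have fFB: "finite (F - B)" using NF[OF F(2) B(2) F(1)] .
    have JF: "J F" "F \<subseteq> E" using mi_ind[OF F(2)] mi_sub[OF F(2)] by auto
    have JF0: "J (F - S)" using m_down[OF NJ JF(1)] by auto
    have FSZ: "F - S \<subseteq> Z" using JF Z_def by auto
    obtain F1 where F1: "F - S \<subseteq> F1" "max_indep J Z F1" using m_ext[OF NJ JF0 FSZ ZE] by blast
    have JF1: "J F1" "F1 \<subseteq> Z" using mi_ind[OF F1(2)] mi_sub[OF F1(2)] by auto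
    have "F - F1 \<subseteq> S" using F1 by auto
    then have "finite (F - F1)" using assms(5) finite_subset by auto
    then have f1: "finite (F1 - F)" using LemmaX[OF NJ order_refl F(2) JF1(1)] JF1 ZE by auto
    have "F1 - B' \<subseteq> (F1 - F) \<union> (F - B)" using BS JF1(2) Z_def by auto
    then have f2: "finite (F1 - B')" using f1 fFB finite_subset by auto
    have JF': "J F'" "F' \<subseteq> Z" using mi_ind[OF F'] mi_sub[OF F'] by auto
    have "F1 - F' \<subseteq> F1 - B'" using BF by auto
    then have "finite (F1 - F')" using f2 finite_subset by auto
    then have f3: "finite (F' - F1)" using LemmaX[OF NJ ZE F1(2) JF'(1) JF'(2)] by auto
    have "F' - B' \<subseteq> (F' - F1) \<union> (F1 - B')" by auto
    then show "finite (F' - B')" using f2 f3 finite_subset by auto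
  qed
  have P3: "\<forall>n. \<not> n_nearly_finitary n Z (\<lambda>A. Ind A \<and> A \<subseteq> Z)"
  proof
    fix n
    define k where "k = card S"
    obtain F B where FB: "max_indep J E F" "max_indep Ind E B" "B \<subseteq> F"
      "\<not> (finite (F - B) \<and> card (F - B) \<le> 2 * n + 3 * k)"
      using assms(3) unfolding n_nearly_finitary_def J_def bE by blast
    have fFB: "finite (F - B)" using NF[OF FB(1,2,3)] .
    then have cFB: "card (F - B) > 2 * n + 3 * k" using FB(4) by auto
    have IB: "Ind B" "B \<subseteq> E" using mi_ind[OF FB(2)] mi_sub[OF FB(2)] by auto
    have IB0: "Ind (B - S)" using m_down[OF M IB(1)] by auto
    obtain B' where B': "B - S \<subseteq> B'" "max_indep Ind Z B'" using m_ext[OF M IB0 _ ZE] IB Z_def by auto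
    have IB': "Ind B'" "B' \<subseteq> Z" using mi_ind[OF B'(2)] mi_sub[OF B'(2)] by auto
    have "B - B' \<subseteq> S" using B' by auto
    then have fBB: "finite (B - B')" "card (B - B') \<le> k" using assms(5) finite_subset card_mono k_def by metis+
    have "card (B' - B) \<le> card (B - B')" using LemmaX[OF M order_refl FB(2) IB'(1)] IB'(2) ZE fBB(1) by auto
    then have cBB: "card (B' - B) \<le> k" using fBB(2) by auto
    have fB'B: "finite (B' - B)" using LemmaX[OF M order_refl FB(2) IB'(1)] IB'(2) ZE fBB(1) by auto
    have JB': "J B'" using fin_of_ind[OF M IB'(1)] J_def by simp
    obtain F' where F': "B' \<subseteq> F'" "max_indep J Z F'" using m_ext[OF NJ JB' IB'(2) ZE] by blast
    have JF': "J F'" "F' \<subseteq> Z" using mi_ind[OF F'(2)] mi_sub[OF F'(2)] by auto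
    have "\<not> (finite (F' - B') \<and> card (F' - B') \<le> n)"
    proof
      assume H: "finite (F' - B') \<and> card (F' - B') \<le> n"
      have JF: "J F" using mi_ind[OF FB(1)] .
      have JFS: "J (F - S)" "F - S \<subseteq> Z" using m_down[OF NJ JF] Z_def mi_sub[OF FB(1)] by auto
      have s1: "F' - (F - S) \<subseteq> (F' - B') \<union> (B' - B)" using JF'(2) Z_def FB(3) by auto
      have f4: "finite (F' - (F - S))" using s1 H fB'B finite_subset by auto
      have c4: "card (F' - (F - S)) \<le> n + k"
      proof -
        have "card (F' - (F - S)) \<le> card ((F' - B') \<union> (B' - B))" using s1 H fB'B card_mono by (metis finite_UnI)
        also have "\<dots> \<le> card (F' - B') + card (B' - B)" by (rule card_Un_le)
        finally show ?thesis using H cBB by auto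
      qed
      have L: "finite ((F - S) - F') \<and> card ((F - S) - F') \<le> card (F' - (F - S))"
        using LemmaX[OF NJ ZE F'(2) JFS(1) JFS(2) f4] .
      define D where "D = (F - S) - B'"
      have sD: "D \<subseteq> (F' - B') \<union> ((F - S) - F')" using D_def by auto
      have cD: "card D \<le> 2 * n + k"
      proof -
        have "card D \<le> card ((F' - B') \<union> ((F - S) - F'))" using sD H L card_mono by (metis finite_UnI)
        also have "\<dots> \<le> card (F' - B') + card ((F - S) - F')" by (rule card_Un_le)
        finally show ?thesis using H L c4 by auto
      qed
      have fD: "finite D" using sD H L finite_subset by (metis finite_UnI)
      have sFB: "F - B \<subseteq> (D \<union> S) \<union> (B' - B)" using D_def by auto
      have "card (F - B) \<le> card ((D \<union> S) \<union> (B' - B))" using sFB fD assms(5) fB'B card_mono by (metis finite_UnI)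
      also have "\<dots> \<le> card (D \<union> S) + card (B' - B)" by (rule card_Un_le)
      also have "\<dots> \<le> card D + card S + card (B' - B)" using card_Un_le[of D S] by auto
      finally have "card (F - B) \<le> 2 * n + 3 * k" using cD cBB k_def by auto
      then show False using cFB by auto
    qed
    then show "\<not> n_nearly_finitary n Z (\<lambda>A. Ind A \<and> A \<subseteq> Z)"
      unfolding n_nearly_finitary_def eq2 bI bJ using F' B'(2) by blast
  qed
  show ?thesis unfolding del_ground_def eq1 Z_def[symmetric] using P1 P2 P3 by blast
qed

end
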